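(* A finite group $G$ is $2'$-simple if and only if it has a subnormal series $1=I_0\trianglelefteq I_1\trianglelefteq\cdots\trianglelefteq I_t=G$ in which every quotient $I_{j+1}/I_j$ is generated by elements of order $2$.
   Context: A finite group $G$ is called $2'$-simple if it has no proper normal subgroup of odd index (equivalently, no nontrivial quotient of odd order). A subnormal series is a chain of subgroups each normal in the next. *)

theory Defs
  imports "HOL-Algebra.Algebra"
begin

definition two_prime_simple :: "('a, 'b) monoid_scheme \<Rightarrow> bool" where
  "two_prime_simple G \<longleftrightarrow>
     (\<forall>N. N \<lhd> G \<and> odd (card (rcosets\<^bsub>G\<^esub> N)) \<longrightarrow> N = carrier G)"

definition generated_by_involutions :: "('a, 'b) monoid_scheme \<Rightarrow> bool" where
  "generated_by_involutions Q \<longleftrightarrow>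
     generate Q {x \<in> carrier Q. group.ord Q x = 2} = carrier Q"

definition involution_subnormal_series ::
    "('a, 'b) monoid_scheme \<Rightarrow> (nat \<Rightarrow> 'a set) \<Rightarrow> nat \<Rightarrow> bool" where
  "involution_subnormal_series G I t \<longleftrightarrow>
     I 0 = {\<one>\<^bsub>G\<^esub>} \<and> I t = carrier G \<and>
     (\<forall>j<t. subgroup (I (Suc j)) G \<and>
            I j \<lhd> (G\<lparr>carrier := I (Suc j)\<rparr>) \<and>
            generated_by_involutions ((G\<lparr>carrier := I (Suc j)\<rparr>) Mod (I j)))"

end

theory Submission imports Defs "HOL-Library.Z2" begin

lemma of_nat_bit: "(of_nat n :: bit) = (if even n then 0 else 1)"
  by (induction n) auto

lemma even_card_fpf:
  assumes "finite T" "\<And>x. x \<in> T \<Longrightarrow> h x \<in> T" "\<And>x. x \<in> T \<Longrightarrow> h (h x) = x"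
    "\<And>x. x \<in> T \<Longrightarrow> h x \<noteq> x"
  shows "even (card T)"
proof -
  have "(\<Sum>x\<in>T. (1::bit)) = 0"
    by (rule sum_involution_eq_0[where h=h]) (use assms in auto)
  then show ?thesis by (simp add: of_nat_bit split: if_splits)
qed

lemma (in group) even_order_involution:
  assumes "finite (carrier G)" "even (order G)"
  shows "\<exists>x\<in>carrier G. x \<noteq> \<one> \<and> x \<otimes> x = \<one>"
proof (rule ccontr)
  assume no: "\<not> ?thesis"
  let ?T = "carrier G - {\<one>}"
  have "even (card ?T)"
  proof (rule even_card_fpf[where h="\<lambda>x. inv x"])
    show "finite ?T" using assms by auto
    fix x assume x: "x \<in> ?T"
    then show "inv x \<in> ?T" by auto
    show "inv (inv x) = x" using x by auto
    show "inv x \<noteq> x"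
    proof
      assume "inv x = x"
      then have "x \<otimes> x = \<one>" using x by (metis DiffD1 r_inv)
      then show False using no x by auto
    qed
  qed
  moreover have "card ?T = order G - 1" unfolding order_def
    using assms by (simp add: card_Diff_singleton)
  moreover have "order G > 0" using assms unfolding order_def
    by (simp add: card_gt_0_iff carrier_not_empty)
  ultimately show False using assms(2) by simp
qed


lemma (in normal) coset_one_iff:
  "x \<in> carrier G \<Longrightarrow> H #> x = H \<longleftrightarrow> x \<in> H"
  using coset_join1 rcos_const subgroup_axioms by blast

lemma (in normal) ord2_iff:
  assumes x: "x \<in> carrier G"
  shows "group.ord (G Mod H) (H #> x) = 2 \<longleftrightarrow> x \<notin> H \<and> x \<otimes> x \<in> H"
proof -
  interpret Q: group "G Mod H" by (rule factorgroup_is_group)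
  have X: "H #> x \<in> carrier (G Mod H)"
    using x by (auto simp: FactGroup_def RCOSETS_def)
  have sq: "(H #> x) [^]\<^bsub>G Mod H\<^esub> (2::nat) = H #> (x \<otimes> x)"
  proof -
    have "H #> x \<in> rcosets H" using x by (auto simp: RCOSETS_def)
    then show ?thesis using x by (simp add: numeral_2_eq_2 rcos_sum rcosets_mult_eq)
  qed
  have xx: "x \<otimes> x \<in> carrier G" using x by simp
  have "group.ord (G Mod H) (H #> x) dvd 2 \<longleftrightarrow> x \<otimes> x \<in> H"
    using Q.pow_eq_id[OF X, of 2] sq coset_one_iff[OF xx] by simp
  moreover have "group.ord (G Mod H) (H #> x) = 1 \<longleftrightarrow> x \<in> H"
    using Q.ord_eq_1[OF X] coset_one_iff[OF x] by simp
  moreover have "d dvd (2::nat) \<longleftrightarrow> d = 1 \<or> d = 2" for d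
  proof
    assume "d dvd 2"
    have "d \<le> 2" using \<open>d dvd 2\<close> by (rule dvd_imp_le) simp
    moreover have "d \<noteq> 0" using \<open>d dvd 2\<close> by (rule_tac ccontr) simp
    ultimately show "d = 1 \<or> d = 2" by auto
  qed auto
  ultimately show ?thesis by auto
qed


lemma (in normal) gen_inv_cover:
  assumes gi: "generated_by_involutions (G Mod H)" and P: "subgroup P G" "H \<subseteq> P"
    and sq: "\<And>x. x \<in> carrier G \<Longrightarrow> x \<otimes> x \<in> H \<Longrightarrow> x \<in> P"
  shows "carrier G \<subseteq> P"
proof -
  interpret Q: group "G Mod H" by (rule factorgroup_is_group)
  let ?S = "{Y \<in> carrier (G Mod H). group.ord (G Mod H) Y = 2}"
  have invc: "\<exists>p\<in>P. Z = H #> p" if "Z \<in> ?S" for Z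
  proof -
    from that obtain x where x: "x \<in> carrier G" "Z = H #> x"
      by (auto simp: FactGroup_def RCOSETS_def)
    then have "x \<otimes> x \<in> H" using that ord2_iff by auto
    then show ?thesis using sq x by auto
  qed
  have claim: "\<exists>p\<in>P. Z = H #> p" if "Z \<in> generate (G Mod H) ?S" for Z
    using that
  proof induction
    case one
    then show ?case using P subgroup.one_closed[OF P(1)] coset_mult_one[OF subset] by auto
  next
    case (incl h)
    then show ?case using invc by blast
  next
    case (inv h)
    then obtain p where p: "p \<in> P" "h = H #> p" using invc by blast
    have pc: "p \<in> carrier G" using p P subgroup.subset by blast
    have "h \<in> carrier (G Mod H)" using inv by auto
    then have "inv\<^bsub>G Mod H\<^esub> h = H #> inv p" using inv_FactGroup rcos_inv pc p by simp
    then show ?case using p subgroup.m_inv_closed[OF P(1)] by blast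
  next
    case (eng h1 h2)
    then obtain p1 p2 where p: "p1 \<in> P" "h1 = H #> p1" "p2 \<in> P" "h2 = H #> p2" by blast
    have pc: "p1 \<in> carrier G" "p2 \<in> carrier G" using p P subgroup.subset by blast+
    have "h1 \<otimes>\<^bsub>G Mod H\<^esub> h2 = H #> (p1 \<otimes> p2)" using p pc rcos_sum by simp
    then show ?case using p subgroup.m_closed[OF P(1)] by blast
  qed
  show ?thesis
  proof
    fix g assume g: "g \<in> carrier G"
    then have "H #> g \<in> carrier (G Mod H)" by (auto simp: FactGroup_def RCOSETS_def)
    then have "H #> g \<in> generate (G Mod H) ?S" using gi by (simp add: generated_by_involutions_def)
    then obtain p where p: "p \<in> P" "H #> g = H #> p" using claim by blast
    have "g \<in> H #> p" using rcos_self[OF g subgroup_axioms] p by simp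
    then obtain h where "h \<in> H" "g = h \<otimes> p" by (auto simp: r_coset_def)
    then show "g \<in> P" using p P subgroup.m_closed[OF P(1)] by blast
  qed
qed


lemma (in normal) gen_inv_of_gen:
  assumes gen: "carrier G \<subseteq> generate G {x \<in> carrier G. x \<otimes> x \<in> H}"
  shows "generated_by_involutions (G Mod H)"
proof -
  interpret Q: group "G Mod H" by (rule factorgroup_is_group)
  let ?S = "{Y \<in> carrier (G Mod H). group.ord (G Mod H) Y = 2}"
  let ?Gs = "generate (G Mod H) ?S"
  have sg: "subgroup ?Gs (G Mod H)" by (rule Q.generate_is_subgroup) auto
  let ?P = "{g \<in> carrier G. H #> g \<in> ?Gs}"
  have cos: "H #> g \<in> carrier (G Mod H)" if "g \<in> carrier G" for g
    using that by (auto simp: FactGroup_def RCOSETS_def)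
  have oneP: "H #> \<one> = H" using coset_mult_one[OF subset] .
  have sP: "subgroup ?P G"
  proof (rule subgroupI)
    show "?P \<subseteq> carrier G" by auto
    have "H \<in> ?Gs" using generate.one[of "G Mod H" ?S] by simp
    then show "?P \<noteq> {}" using oneP by auto
  next
    fix a assume a: "a \<in> ?P"
    then have "inv\<^bsub>G Mod H\<^esub> (H #> a) \<in> ?Gs" using subgroup.m_inv_closed[OF sg] by auto
    moreover have "inv\<^bsub>G Mod H\<^esub> (H #> a) = H #> inv a"
      using a cos[of a] inv_FactGroup rcos_inv by auto
    ultimately show "inv a \<in> ?P" using a by auto
  next
    fix a b assume a: "a \<in> ?P" and b: "b \<in> ?P"
    then have "(H #> a) \<otimes>\<^bsub>G Mod H\<^esub> (H #> b) \<in> ?Gs" using subgroup.m_closed[OF sg] by auto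
    moreover have "(H #> a) \<otimes>\<^bsub>G Mod H\<^esub> (H #> b) = H #> (a \<otimes> b)"
      using a b rcos_sum by auto
    ultimately show "a \<otimes> b \<in> ?P" using a b by auto
  qed
  have "{x \<in> carrier G. x \<otimes> x \<in> H} \<subseteq> ?P"
  proof
    fix x assume x: "x \<in> {x \<in> carrier G. x \<otimes> x \<in> H}"
    show "x \<in> ?P"
    proof (cases "x \<in> H")
      case True
      then have "H #> x = H" using coset_one_iff x by auto
      then show ?thesis using x generate.one[of "G Mod H" ?S] by simp
    next
      case False
      then have "H #> x \<in> ?S" using ord2_iff x cos by auto
      then show ?thesis using x generate.incl[of _ ?S "G Mod H"] by auto
    qed
  qed
  then have "generate G {x \<in> carrier G. x \<otimes> x \<in> H} \<subseteq> ?P"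
    using generate_subgroup_incl sP by blast
  then have cP: "carrier G \<subseteq> ?P" using gen by blast
  have "carrier (G Mod H) \<subseteq> ?Gs"
  proof
    fix Z assume "Z \<in> carrier (G Mod H)"
    then obtain g where "g \<in> carrier G" "Z = H #> g" by (auto simp: FactGroup_def RCOSETS_def)
    then show "Z \<in> ?Gs" using cP by auto
  qed
  moreover have "?Gs \<subseteq> carrier (G Mod H)" using subgroup.subset[OF sg] .
  ultimately show ?thesis unfolding generated_by_involutions_def by blast
qed


lemma (in normal) odd_index_sq:
  assumes odd: "odd (card (rcosets H))" and x: "x \<in> carrier G" and xx: "x \<otimes> x \<in> H"
  shows "x \<in> H"
proof -
  interpret Q: group "G Mod H" by (rule factorgroup_is_group)
  have Z: "H #> x \<in> carrier (G Mod H)"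
    using x by (auto simp: FactGroup_def RCOSETS_def)
  have sq: "(H #> x) [^]\<^bsub>G Mod H\<^esub> (2::nat) = H #> (x \<otimes> x)"
  proof -
    have "H #> x \<in> rcosets H" using x by (auto simp: RCOSETS_def)
    then show ?thesis using x by (simp add: numeral_2_eq_2 rcos_sum rcosets_mult_eq)
  qed
  have "H #> (x \<otimes> x) = H" using coset_one_iff xx x by simp
  then have d2: "group.ord (G Mod H) (H #> x) dvd 2"
    using Q.pow_eq_id[OF Z, of 2] sq by simp
  have "group.ord (G Mod H) (H #> x) dvd order (G Mod H)"
    using Q.ord_dvd_group_order[OF Z] .
  then have "odd (group.ord (G Mod H) (H #> x))"
    using odd unfolding order_def by (auto simp: FactGroup_def dest: dvd_trans[where b="group.ord (G Mod H) (H #> x)"])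
  moreover have "d dvd (2::nat) \<Longrightarrow> odd d \<Longrightarrow> d = 1" for d
  proof -
    assume "d dvd 2" "odd d"
    have "d \<le> 2" using \<open>d dvd 2\<close> by (rule dvd_imp_le) simp
    moreover have "d \<noteq> 0" using \<open>d dvd 2\<close> by (rule_tac ccontr) simp
    ultimately show "d = 1" using \<open>odd d\<close> by (cases d) auto
  qed
  ultimately have "group.ord (G Mod H) (H #> x) = 1" using d2 by blast
  then have "H #> x = H" using Q.ord_eq_1[OF Z] by simp
  then show ?thesis using coset_one_iff x by simp
qed


lemma (in group) inv_cancel_aux:
  "x \<in> carrier G \<Longrightarrow> y \<in> carrier G \<Longrightarrow> inv x \<otimes> (x \<otimes> y) = y"
  by (metis l_inv l_one m_assoc inv_closed)

lemma series_imp_simple: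
  fixes G :: "('a, 'b) monoid_scheme" (structure)
  assumes grp: "group G" and fin: "finite (carrier G)" and ser: "involution_subnormal_series G I t"
  shows "two_prime_simple G"
  unfolding two_prime_simple_def
proof (intro allI impI, elim conjE)
  interpret group G by (rule grp)
  fix M assume M: "M \<lhd> G" and odd: "odd (card (rcosets\<^bsub>G\<^esub> M))"
  interpret MN: normal M G by (rule M)
  have I0: "I 0 = {\<one>}" and It: "I t = carrier G"
    and st: "\<And>j. j < t \<Longrightarrow> subgroup (I (Suc j)) G \<and> I j \<lhd> (G\<lparr>carrier := I (Suc j)\<rparr>) \<and>
            generated_by_involutions ((G\<lparr>carrier := I (Suc j)\<rparr>) Mod (I j))"
    using ser unfolding involution_subnormal_series_def by auto
  have "j \<le> t \<Longrightarrow> I j \<subseteq> M" for j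
  proof (induction j)
    case 0
    then show ?case using I0 MN.one_closed by simp
  next
    case (Suc j)
    then have jt: "j < t" and IH: "I j \<subseteq> M" by auto
    have sS: "subgroup (I (Suc j)) G" and nK: "I j \<lhd> (G\<lparr>carrier := I (Suc j)\<rparr>)"
      and gi: "generated_by_involutions ((G\<lparr>carrier := I (Suc j)\<rparr>) Mod (I j))"
      using st[OF jt] by auto
    interpret K: normal "I j" "G\<lparr>carrier := I (Suc j)\<rparr>" by (rule nK)
    have sub: "I j \<subseteq> I (Suc j)" using K.subset by simp
    have sP: "subgroup (M \<inter> I (Suc j)) (G\<lparr>carrier := I (Suc j)\<rparr>)"
      using subgroup_incl[OF subgroups_Inter_pair[OF MN.subgroup_axioms sS] sS] by blast
    have "carrier (G\<lparr>carrier := I (Suc j)\<rparr>) \<subseteq> M \<inter> I (Suc j)"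
    proof (rule K.gen_inv_cover[OF gi sP])
      show "I j \<subseteq> M \<inter> I (Suc j)" using IH sub by blast
      fix x assume x: "x \<in> carrier (G\<lparr>carrier := I (Suc j)\<rparr>)"
        and xx: "x \<otimes>\<^bsub>G\<lparr>carrier := I (Suc j)\<rparr>\<^esub> x \<in> I j"
      have xc: "x \<in> carrier G" using x subgroup.subset[OF sS] by auto
      have "x \<otimes> x \<in> M" using xx IH by auto
      then have "x \<in> M" using MN.odd_index_sq[OF odd xc] by simp
      then show "x \<in> M \<inter> I (Suc j)" using x by simp
    qed
    then show ?case by auto
  qed
  then have "carrier G \<subseteq> M" using It by auto
  then show "M = carrier G" using MN.subset by blast
qed


lemma simple_imp_series:
  fixes G :: "('a, 'b) monoid_scheme" (structure)
  assumes grp: "group G" and fin: "finite (carrier G)" and simp2: "two_prime_simple G"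
  shows "\<exists>I t. involution_subnormal_series G I t"
proof -
  interpret group G by (rule grp)
  define f where "f = (\<lambda>A. generate G {x \<in> carrier G. x \<otimes> x \<in> A})"
  define I where "I = (\<lambda>j. (f ^^ j) {\<one>})"
  have IS: "I (Suc j) = generate G {x \<in> carrier G. x \<otimes> x \<in> I j}" for j
    by (simp add: I_def f_def)
  have I0: "I 0 = {\<one>}" by (simp add: I_def)
  have normI: "I j \<lhd> G" for j
  proof (induction j)
    case 0
    then show ?case using I0 one_is_normal by simp
  next
    case (Suc j)
    interpret N: normal "I j" G by (rule Suc)
    show ?case unfolding IS
    proof (rule normal_generateI)
      show "{x \<in> carrier G. x \<otimes> x \<in> I j} \<subseteq> carrier G" by auto
      fix h g assume h: "h \<in> {x \<in> carrier G. x \<otimes> x \<in> I j}" and g: "g \<in> carrier G"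
      have "g \<otimes> h \<otimes> inv g \<otimes> (g \<otimes> h \<otimes> inv g) = g \<otimes> (h \<otimes> h) \<otimes> inv g"
        using h g by (auto simp add: m_assoc inv_cancel_aux)
      moreover have "g \<otimes> (h \<otimes> h) \<otimes> inv g \<in> I j" using N.inv_op_closed2 h g by auto
      ultimately show "g \<otimes> h \<otimes> inv g \<in> {x \<in> carrier G. x \<otimes> x \<in> I j}" using h g by auto
    qed
  qed
  have subI: "I j \<subseteq> carrier G" for j
    using subgroup.subset[OF normal_imp_subgroup[OF normI[of j]]] .
  have incI: "I j \<subseteq> I (Suc j)" for j
  proof
    fix x assume x: "x \<in> I j"
    have "x \<otimes> x \<in> I j" using subgroup.m_closed[OF normal_imp_subgroup[OF normI[of j]] x x] .
    have "x \<in> carrier G" using x subI[of j] by blast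
    then show "x \<in> I (Suc j)" unfolding IS using \<open>x \<otimes> x \<in> I j\<close> by (intro generate.incl) simp
  qed
  have "\<exists>m. I (Suc m) = I m"
  proof (rule ccontr)
    assume "\<not> ?thesis"
    then have ps: "I j \<subset> I (Suc j)" for j using incI by auto
    have "card (I j) \<ge> j" for j
    proof (induction j)
      case (Suc j)
      have "card (I j) < card (I (Suc j))"
        using psubset_card_mono[OF finite_subset[OF subI fin] ps] .
      then show ?case using Suc by simp
    qed simp
    moreover have "card (I (Suc (card (carrier G)))) \<le> card (carrier G)"
      using card_mono[OF fin subI] .
    ultimately have "Suc (card (carrier G)) \<le> card (carrier G)"
      by (meson le_trans)
    then show False by simp
  qed
  then obtain m where m: "I (Suc m) = I m" by blast
  interpret Nm: normal "I m" G by (rule normI)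
  have "odd (card (rcosets (I m)))"
  proof (rule ccontr)
    assume ev: "\<not> odd (card (rcosets (I m)))"
    interpret Q: group "G Mod I m" by (rule Nm.factorgroup_is_group)
    have fQ: "finite (carrier (G Mod I m))"
      using fin by (simp add: carrier_FactGroup)
    have "even (order (G Mod I m))" using ev by (simp add: order_def FactGroup_def)
    then obtain Z where Z: "Z \<in> carrier (G Mod I m)" "Z \<noteq> I m" "Z <#> Z = I m"
      using Q.even_order_involution[OF fQ] by auto
    then obtain x where x: "x \<in> carrier G" "Z = I m #> x" by (auto simp: FactGroup_def RCOSETS_def)
    then have "I m #> (x \<otimes> x) = I m" using Z Nm.rcos_sum by simp
    then have "x \<otimes> x \<in> I m" using Nm.coset_one_iff x by simp
    then have "x \<in> I (Suc m)" unfolding IS using x by (auto intro: generate.incl)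
    then have "Z = I m" using m x Nm.coset_one_iff by simp
    then show False using Z by simp
  qed
  then have Im: "I m = carrier G" using simp2 normI[of m] unfolding two_prime_simple_def by blast
  have "involution_subnormal_series G I m"
    unfolding involution_subnormal_series_def
  proof (intro conjI allI impI)
    show "I 0 = {\<one>}" by (rule I0)
    show "I m = carrier G" by (rule Im)
    fix j assume "j < m"
    show sS: "subgroup (I (Suc j)) G" using normal_imp_subgroup[OF normI] .
    show nK: "I j \<lhd> G\<lparr>carrier := I (Suc j)\<rparr>"
      using normal_restrict_supergroup[OF sS normI incI] .
    interpret K: normal "I j" "G\<lparr>carrier := I (Suc j)\<rparr>" by (rule nK)
    let ?E = "{x \<in> carrier G. x \<otimes> x \<in> I j}"
    have Esub: "?E \<subseteq> I (Suc j)" unfolding IS by (auto intro: generate.incl)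
    have "{x \<in> carrier (G\<lparr>carrier := I (Suc j)\<rparr>). x \<otimes>\<^bsub>G\<lparr>carrier := I (Suc j)\<rparr>\<^esub> x \<in> I j} = ?E"
      using Esub subI by auto
    moreover have "generate (G\<lparr>carrier := I (Suc j)\<rparr>) ?E = I (Suc j)"
      using generate_consistent[OF Esub sS] IS by simp
    ultimately show "generated_by_involutions (G\<lparr>carrier := I (Suc j)\<rparr> Mod I j)"
      by (intro K.gen_inv_of_gen) simp
  qed
  then show ?thesis by blast
qed

theorem mainTheorem15:
  fixes G :: "('a, 'b) monoid_scheme"
  assumes "group G" and "finite (carrier G)"
  shows "two_prime_simple G \<longleftrightarrow> (\<exists>I t. involution_subnormal_series G I t)"
proof
  assume "two_prime_simple G"
  then show "\<exists>I t. involution_subnormal_series G I t"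
    by (rule simple_imp_series[OF assms])
next
  assume "\<exists>I t. involution_subnormal_series G I t"
  then obtain I t where "involution_subnormal_series G I t" by blast
  then show "two_prime_simple G" by (rule series_imp_simple[OF assms])
qed

end
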